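(* Let $\alpha$, $F_\alpha$ and $L_\alpha$ be as in the context. The jump transformation $F^*_\alpha$ of $F_\alpha$ with respect to $A_1$, defined by $F_\alpha^*(x):=F_\alpha^{\rho_\alpha(x)}(x)$ where $\rho_\alpha(x):=\inf\{n\ge0:F_\alpha^n(x)\in A_1\}+1$, coincides with $L_\alpha$ (on $\mathcal U\setminus\{0\}$, where $\rho_\alpha$ is finite).
   Context: Let $\mathcal U=[0,1]$. $\alpha=\{A_n:n\in\mathbb N\}$ is a countable partition of $\mathcal U$ (up to the point $0$) into left-open, right-closed intervals of positive length, ordered from right to left starting with $A_1$, accumulating only at $0$; $a_n$ is the length of $A_n$ and $t_n:=\sum_{k\ge n}a_k$, so $A_n=(t_{n+1},t_n]$. The $\alpha$-Farey map is $F_\alpha(x)=(1-x)/a_1$ on $A_1$, $F_\alpha(x)=a_{n-1}(x-t_{n+1})/a_n+t_n$ on $A_n$ ($n\ge2$), $F_\alpha(0)=0$. The $\alpha$-Lüroth map is $L_\alpha(x)=(t_n-x)/a_n$ on $A_n$, $L_\alpha(0)=0$. *)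

theory Defs
  imports "HOL-Analysis.Analysis"
begin

text \<open>A partition alpha is encoded by the sequence of lengths a 1, a 2, ...
  (index 0 is unused).  It is admissible if all lengths are positive,
  summable, and sum to 1.\<close>

definition admissible_partition :: "(nat \<Rightarrow> real) \<Rightarrow> bool" where
  "admissible_partition a \<longleftrightarrow>
     (\<forall>n\<ge>1. a n > 0) \<and> summable a \<and> (\<Sum>k. a (k + 1)) = 1"

definition tail :: "(nat \<Rightarrow> real) \<Rightarrow> nat \<Rightarrow> real" where
  "tail a n = (\<Sum>k. a (k + n))"

definition part :: "(nat \<Rightarrow> real) \<Rightarrow> nat \<Rightarrow> real set" where
  "part a n = {tail a (Suc n) <.. tail a n}"

definition part_index :: "(nat \<Rightarrow> real) \<Rightarrow> real \<Rightarrow> nat" where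
  "part_index a x = (THE n. n \<ge> 1 \<and> x \<in> part a n)"

definition farey :: "(nat \<Rightarrow> real) \<Rightarrow> real \<Rightarrow> real" where
  "farey a x =
     (if x = 0 then 0
      else let n = part_index a x in
        if n = 1 then (1 - x) / a 1
        else a (n - 1) * (x - tail a (n + 1)) / a n + tail a n)"

definition luroth :: "(nat \<Rightarrow> real) \<Rightarrow> real \<Rightarrow> real" where
  "luroth a x =
     (if x = 0 then 0
      else let n = part_index a x in (tail a n - x) / a n)"

definition first_return :: "(nat \<Rightarrow> real) \<Rightarrow> real \<Rightarrow> nat" where
  "first_return a x = Inf {n. (farey a ^^ n) x \<in> part a 1} + 1"

definition jump_farey :: "(nat \<Rightarrow> real) \<Rightarrow> real \<Rightarrow> real" where
  "jump_farey a x = (farey a ^^ first_return a x) x"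

end

theory Submission
  imports Defs
begin

lemma tail_eq: "summable a \<Longrightarrow> tail a n = suminf a - (\<Sum>i<n. a i)"
  unfolding tail_def by (rule suminf_minus_initial_segment)

lemma tail_Suc: "summable a \<Longrightarrow> tail a n = a n + tail a (Suc n)"
  by (simp add: tail_eq)

lemma tail_lim: "summable a \<Longrightarrow> (\<lambda>n. tail a n) \<longlonglongrightarrow> 0"
proof -
  assume s: "summable a"
  have "(\<lambda>n. suminf a - (\<Sum>i<n. a i)) \<longlonglongrightarrow> suminf a - suminf a"
    by (intro tendsto_diff tendsto_const summable_LIMSEQ s)
  thus ?thesis by (simp add: tail_eq[OF s])
qed

context
  fixes a :: "nat \<Rightarrow> real"
  assumes adm: "admissible_partition a"
begin

lemma pos: "n \<ge> 1 \<Longrightarrow> a n > 0"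
  using adm unfolding admissible_partition_def by auto

lemma summ: "summable a"
  using adm unfolding admissible_partition_def by auto

lemma tail1: "tail a 1 = 1"
  using adm unfolding admissible_partition_def tail_def by auto

lemma tail_Suc': "tail a n = a n + tail a (Suc n)"
  by (rule tail_Suc[OF summ])

lemma tail_mono: "1 \<le> m \<Longrightarrow> m < n \<Longrightarrow> tail a n < tail a m"
proof (induction n rule: less_induct)
  case (less n)
  then obtain k where n: "n = Suc k" by (cases n) auto
  have "tail a n < tail a k" using tail_Suc'[of k] pos[of k] less n by simp
  show ?case
  proof (cases "m = k")
    case False
    hence "tail a k < tail a m" using less n by auto
    thus ?thesis using \<open>tail a n < tail a k\<close> by simp
  qed (use \<open>tail a n < tail a k\<close> in simp)
qed

lemma tail_pos: "n \<ge> 1 \<Longrightarrow> tail a n > 0"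
  unfolding tail_def
  by (rule suminf_pos) (auto intro: pos simp: summable_iff_shift summ)

lemma part_disj: "1 \<le> m \<Longrightarrow> 1 \<le> n \<Longrightarrow> x \<in> part a m \<Longrightarrow> x \<in> part a n \<Longrightarrow> m = n"
proof (rule ccontr)
  assume h: "1 \<le> m" "1 \<le> n" "x \<in> part a m" "x \<in> part a n" "m \<noteq> n"
  { fix p q assume "1 \<le> p" "p < q" "x \<in> part a p" "x \<in> part a q"
    hence False using tail_mono[of "Suc p" q] unfolding part_def by (cases "Suc p = q") auto }
  thus False using h by (metis linorder_neqE_nat)
qed

lemma part_index_eq: "1 \<le> n \<Longrightarrow> x \<in> part a n \<Longrightarrow> part_index a x = n"
  unfolding part_index_def by (rule the_equality) (use part_disj in blast)+

lemma part_exists: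
  assumes x: "0 < x" "x \<le> 1"
  shows "\<exists>n\<ge>1. x \<in> part a n"
proof -
  have "eventually (\<lambda>m. tail a m < x) sequentially"
    using order_tendstoD(2)[OF tail_lim[OF summ], of x] x by simp
  then obtain m0 where "\<And>m. m \<ge> m0 \<Longrightarrow> tail a m < x" by (auto simp: eventually_sequentially)
  hence ex: "\<exists>m. tail a m < x \<and> m \<ge> 1" by (metis le_add2 add.commute)
  define m where "m = (LEAST m. tail a m < x \<and> m \<ge> 1)"
  have m: "tail a m < x" "m \<ge> 1" using LeastI_ex[OF ex] unfolding m_def by auto
  have "m \<noteq> 1" using m tail1 x by auto
  then obtain n where n: "m = Suc n" "n \<ge> 1" using m by (cases m) auto
  have "\<not> (tail a n < x \<and> n \<ge> 1)" using not_less_Least[of n "\<lambda>m. tail a m < x \<and> m \<ge> 1"] n unfolding m_def by auto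
  hence "x \<le> tail a n" using n by auto
  thus ?thesis using n m unfolding part_def by auto
qed

lemma farey_step:
  assumes n: "n \<ge> 2" and x: "x \<in> part a n"
  shows "farey a x = a (n - 1) * (x - tail a (n + 1)) / a n + tail a n"
    and "farey a x \<in> part a (n - 1)"
proof -
  have x0: "x \<noteq> 0" using x tail_pos[of "Suc n"] unfolding part_def by auto
  have pi: "part_index a x = n" using part_index_eq[of n x] n x by auto
  show f: "farey a x = a (n - 1) * (x - tail a (n + 1)) / a n + tail a n"
    unfolding farey_def using x0 pi n by (simp add: Let_def)
  have an: "a n > 0" "a (n-1) > 0" using pos n by auto
  have tn: "tail a n = a n + tail a (n+1)" "tail a (n-1) = a (n-1) + tail a n"
    using tail_Suc'[of n] tail_Suc'[of "n-1"] n by auto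
  have xr: "tail a (n+1) < x" "x \<le> tail a n" using x unfolding part_def by auto
  have "0 < a (n - 1) * (x - tail a (n + 1)) / a n" using an xr by simp
  moreover have "a (n - 1) * (x - tail a (n + 1)) / a n \<le> a (n-1)"
    using an xr tn by (simp add: divide_le_eq mult_left_mono)
  ultimately show "farey a x \<in> part a (n - 1)"
    unfolding f part_def using n tn by auto
qed

lemma iter:
  "x \<in> part a (k+1) \<Longrightarrow> (\<forall>j\<le>k. (farey a ^^ j) x \<in> part a (k+1-j)) \<and>
     (farey a ^^ k) x = tail a 2 + a 1 * (x - tail a (k+2)) / a (k+1)"
proof (induction k arbitrary: x)
  case 0
  then show ?case using tail_Suc'[of 1] pos[of 1] by (simp add: field_simps numeral_2_eq_2)
next
  case (Suc k)
  have fs: "farey a x = a (k+1) * (x - tail a (k + 3)) / a (k+2) + tail a (k+2)"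
    "farey a x \<in> part a (k+1)"
    using farey_step[of "k+2" x] Suc.prems by (auto simp: numeral_3_eq_3 numeral_2_eq_2)
  note IH = Suc.IH[OF fs(2)]
  have a: "a (k+1) > 0" "a (k+2) > 0" using pos by auto
  have A: "\<forall>j\<le>Suc k. (farey a ^^ j) x \<in> part a (Suc k+1-j)"
  proof (intro allI impI)
    fix j assume j: "j \<le> Suc k"
    show "(farey a ^^ j) x \<in> part a (Suc k+1-j)"
    proof (cases j)
      case 0 then show ?thesis using Suc.prems by simp
    next
      case (Suc i)
      then show ?thesis using IH j by (simp add: funpow_Suc_right del: funpow.simps)
    qed
  qed
  have "(farey a ^^ Suc k) x = (farey a ^^ k) (farey a x)" by (simp add: funpow_Suc_right del: funpow.simps)
  also have "\<dots> = tail a 2 + a 1 * (farey a x - tail a (k+2)) / a (k+1)" using IH by simp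
  also have "\<dots> = tail a 2 + a 1 * (x - tail a (Suc k+2)) / a (Suc k+1)"
    using a by (simp add: fs(1) field_simps numeral_3_eq_3 numeral_2_eq_2)
  finally show ?case using A by simp
qed

end

theorem lemma2p1:
  fixes a :: "nat \<Rightarrow> real" and x :: real
  assumes "admissible_partition a"
    and "x \<in> {0<..1}"
  shows "{n. (farey a ^^ n) x \<in> part a 1} \<noteq> {} \<and> jump_farey a x = luroth a x"
proof -
  note adm = assms(1)
  obtain n where n: "n \<ge> 1" "x \<in> part a n" using part_exists[OF adm] assms(2) by auto
  then obtain k where k: "n = k + 1" by (metis add.commute le_Suc_ex)
  note it = iter[OF adm, of x k] n k
  have ink: "(farey a ^^ k) x \<in> part a 1" using it by auto
  have notin: "j < k \<Longrightarrow> (farey a ^^ j) x \<notin> part a 1" for j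
  proof
    assume j: "j < k" "(farey a ^^ j) x \<in> part a 1"
    have "(farey a ^^ j) x \<in> part a (k+1-j)" using it j by auto
    hence "1 = k+1-j" using part_disj[OF adm, of 1 "k+1-j" "(farey a ^^ j) x"] j by auto
    thus False using j by simp
  qed
  have inf: "Inf {n. (farey a ^^ n) x \<in> part a 1} = k"
    unfolding Inf_nat_def
    by (rule Least_equality) (use ink notin not_less in auto)
  define y where "y = (farey a ^^ k) x"
  have y: "y = tail a 2 + a 1 * (x - tail a (k+2)) / a (k+1)" using it y_def by simp
  have y1: "y \<in> part a 1" using ink y_def by simp
  have y0: "y \<noteq> 0" using y1 tail_pos[OF adm, of 2] unfolding part_def by (auto simp: numeral_2_eq_2)
  have "jump_farey a x = farey a y"
    unfolding jump_farey_def first_return_def inf y_def by simp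
  also have "\<dots> = (1 - y) / a 1"
    unfolding farey_def using y0 part_index_eq[OF adm _ y1] by simp
  also have "\<dots> = (tail a (k+1) - x) / a (k+1)"
  proof -
    have h: "tail a 2 = 1 - a 1" using tail1[OF adm] tail_Suc'[OF adm, of 1] by (simp add: numeral_2_eq_2)
    show ?thesis using h tail_Suc'[OF adm, of "k+1"] pos[OF adm, of 1] pos[OF adm, of "k+1"]
    by (simp add: y field_simps) (metis distrib_left mult.assoc mult.commute mult_1_right h add_diff_cancel_left' diff_add_cancel)
  qed
  also have "\<dots> = luroth a x"
    unfolding luroth_def using assms(2) part_index_eq[OF adm n(1) n(2)] k by simp
  finally show ?thesis using ink by auto
qed

end
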